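(* Consider the multiplicative symmetric QRT map given by the recurrence $$u_{n+1}u_{n-1}=\frac{a_3u_n^2+a_5u_n+a_6}{a_1u_n^2+a_2u_n+a_3},$$ with generic coefficients $a_1,a_2,a_3,a_5,a_6$. Then for every $n\ge0$, the iterate $u_n$, regarded as a rational function of the initial values $u_0,u_1$, has degree $n^2-n+1$.
   Context: "Generic" means e.g. that the coefficients are independent indeterminates (in particular nonzero and with $a_1^2a_6^2-a_1a_2a_5a_6-2a_1a_3^2a_6+a_1a_3a_5^2+a_2^2a_3a_6-a_2a_3^2a_5+a_3^4\neq0$). The degree of a rational function in $u_0,u_1$ is the maximum of the total degrees of the numerator and denominator when it is written as a ratio of coprime polynomials. *)

theory Defs
  imports "HOL-Computational_Algebra.Polynomial" "HOL-Computational_Algebra.Fraction_Field"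
begin

text \<open>Base field: Q(a1,a2,a3,a5,a6), built as an iterated rational function field,
  so that the coefficients are independent indeterminates (generic).\<close>

type_synonym K1 = "rat poly fract"
type_synonym K2 = "K1 poly fract"
type_synonym K3 = "K2 poly fract"
type_synonym K4 = "K3 poly fract"
type_synonym K5 = "K4 poly fract"

definition lift :: "'a::idom \<Rightarrow> 'a poly fract" where
  "lift c = Fract [:c:] 1"

definition var :: "'a::idom poly fract" where
  "var = Fract [:0, 1:] 1"

definition a1 :: K5 where "a1 = lift (lift (lift (lift (var :: K1))))"
definition a2 :: K5 where "a2 = lift (lift (lift (var :: K2)))"
definition a3 :: K5 where "a3 = lift (lift (var :: K3))"
definition a5 :: K5 where "a5 = lift (var :: K4)"
definition a6 :: K5 where "a6 = (var :: K5)"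

text \<open>Bivariate polynomials over K5 in u0, u1: a polynomial in u1 whose coefficients are
  polynomials in u0.  The rational functions in u0,u1 form the fraction field.\<close>

type_synonym bipoly = "K5 poly poly"
type_synonym ratfun = "bipoly fract"

definition tdeg :: "bipoly \<Rightarrow> nat" where
  "tdeg p = Max (insert 0 {i + degree (coeff p i) | i. coeff p i \<noteq> 0})"

definition U0 :: ratfun where "U0 = Fract [:[:0, 1:]:] 1"
definition U1 :: ratfun where "U1 = Fract [:0, 1:] 1"

definition cst :: "K5 \<Rightarrow> ratfun" where "cst c = Fract [:[:c:]:] 1"

fun qrt_u :: "nat \<Rightarrow> ratfun" where
  "qrt_u 0 = U0"
| "qrt_u (Suc 0) = U1"
| "qrt_u (Suc (Suc n)) =
     (cst a3 * (qrt_u (Suc n))^2 + cst a5 * qrt_u (Suc n) + cst a6) /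
     ((cst a1 * (qrt_u (Suc n))^2 + cst a2 * qrt_u (Suc n) + cst a3) * qrt_u n)"

end

theory Submission
  imports Defs "HOL-Computational_Algebra.Polynomial_Factorial"
    "HOL-Computational_Algebra.Field_as_Ring"
begin


instantiation fract :: (idom)
  "{unique_euclidean_ring, normalization_euclidean_semiring, normalization_semidom_multiplicative}"
begin
definition [simp]: "normalize_fract = (normalize_field :: 'a fract \<Rightarrow> _)"
definition [simp]: "unit_factor_fract = (unit_factor_field :: 'a fract \<Rightarrow> _)"
definition [simp]: "modulo_fract = (mod_field :: 'a fract \<Rightarrow> _)"
definition [simp]: "euclidean_size_fract = (euclidean_size_field :: 'a fract \<Rightarrow> _)"
definition [simp]: "division_segment (x :: 'a fract) = 1"
instance
  by standard
    (simp_all add: dvd_field_iff field_split_simps split: if_splits)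
end

instantiation fract :: (idom) euclidean_ring_gcd
begin
definition gcd_fract :: "'a fract \<Rightarrow> 'a fract \<Rightarrow> 'a fract" where
  "gcd_fract = Euclidean_Algorithm.gcd"
definition lcm_fract :: "'a fract \<Rightarrow> 'a fract \<Rightarrow> 'a fract" where
  "lcm_fract = Euclidean_Algorithm.lcm"
definition Gcd_fract :: "'a fract set \<Rightarrow> 'a fract" where
 "Gcd_fract = Euclidean_Algorithm.Gcd"
definition Lcm_fract :: "'a fract set \<Rightarrow> 'a fract" where
 "Lcm_fract = Euclidean_Algorithm.Lcm"
instance by standard (simp_all add: gcd_fract_def lcm_fract_def Gcd_fract_def Lcm_fract_def)
end

instance fract :: (idom) field_gcd ..



lemma map_poly_hom_mult:
  assumes f0: "f 0 = 0" and fa: "\<And>x y. f (x+y) = f x + f y" and fm: "\<And>x y. f (x*y) = f x * f y"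
  shows "map_poly f (p*q) = map_poly f p * map_poly f q"
proof (rule poly_eqI)
  fix n
  have "coeff (map_poly f (p*q)) n = f (\<Sum>i\<le>n. coeff p i * coeff q (n-i))"
    by (simp add: coeff_map_poly f0 coeff_mult)
  also have "\<dots> = (\<Sum>i\<le>n. f (coeff p i * coeff q (n-i)))"
    using sum_comp_morphism[of f "\<lambda>i. coeff p i * coeff q (n-i)" "{..n}", OF f0 fa] by (simp add: o_def)
  also have "\<dots> = coeff (map_poly f p * map_poly f q) n"
    by (simp add: coeff_mult coeff_map_poly f0 fm)
  finally show "coeff (map_poly f (p*q)) n = coeff (map_poly f p * map_poly f q) n" .
qed

lemma map_poly_hom_add:
  assumes f0: "f 0 = 0" and fa: "\<And>x y. f (x+y) = f x + f y"
  shows "map_poly f (p+q) = map_poly f p + map_poly f q"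
  by (rule poly_eqI) (simp add: coeff_map_poly f0 fa)

definition Lc :: "K5 \<Rightarrow> K5 poly poly" where "Lc c = [:[:c:]:]"
definition X0 :: "K5 poly poly" where "X0 = monom (monom 1 1) 1"
definition sig0 :: "K5 poly \<Rightarrow> K5 poly poly" where "sig0 q = poly (map_poly Lc q) X0"
definition sig :: "bipoly \<Rightarrow> K5 poly poly" where "sig p = poly (map_poly sig0 p) [:0,1:]"

lemma Lc_0[simp]: "Lc 0 = 0" and Lc_add: "Lc (x+y) = Lc x + Lc y" and Lc_mult: "Lc (x*y) = Lc x * Lc y"
  and Lc_eq0[simp]: "Lc x = 0 \<longleftrightarrow> x = 0"
  by (auto simp: Lc_def)

lemma sig0_add: "sig0 (p+q) = sig0 p + sig0 q"
  by (simp add: sig0_def map_poly_hom_add Lc_add)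
lemma sig0_mult: "sig0 (p*q) = sig0 p * sig0 q"
  by (simp add: sig0_def map_poly_hom_mult Lc_add Lc_mult)
lemma sig0_0[simp]: "sig0 0 = 0" by (simp add: sig0_def)

lemma X0_pow: "X0 ^ j = monom (monom 1 j) j"
  by (induct j) (simp_all add: X0_def mult_monom monom_0 one_pCons)

lemma sig0_sum: "sig0 q = (\<Sum>j\<le>degree q. monom (monom (coeff q j) j) j)"
proof -
  have d: "degree (map_poly Lc q) = degree q" by (rule degree_map_poly) simp
  have "sig0 q = (\<Sum>j\<le>degree q. Lc (coeff q j) * X0 ^ j)"
    unfolding sig0_def poly_altdef d by (simp add: coeff_map_poly)
  also have "\<dots> = (\<Sum>j\<le>degree q. monom (monom (coeff q j) j) j)"
    by (intro sum.cong refl) (simp add: X0_pow Lc_def mult_monom flip: monom_0)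
  finally show ?thesis .
qed

lemma coeff_sig0: "coeff (sig0 q) m = monom (coeff q m) m"
proof -
  have "coeff (sig0 q) m = (\<Sum>j\<le>degree q. if j = m then monom (coeff q j) j else 0)"
    by (simp add: sig0_sum coeff_sum)
  also have "\<dots> = monom (coeff q m) m"
    by (cases "m \<le> degree q") (auto simp: coeff_eq_0)
  finally show ?thesis .
qed

lemma sig0_eq0[simp]: "sig0 q = 0 \<longleftrightarrow> q = 0"
proof
  assume "sig0 q = 0"
  then have "\<And>m. coeff q m = 0" using coeff_sig0 by (metis coeff_0 monom_eq_0_iff)
  then show "q = 0" by (simp add: poly_eqI)
qed simp

lemma sig_sum: "sig p = (\<Sum>i\<le>degree p. sig0 (coeff p i) * monom 1 i)"
proof -
  have d: "degree (map_poly sig0 p) = degree p" by (rule degree_map_poly) simp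
  show ?thesis unfolding sig_def poly_altdef d
    by (simp add: coeff_map_poly monom_altdef)
qed

lemma coeff_coeff_sig:
  "coeff (coeff (sig p) k) m = (if m \<le> k then coeff (coeff p (k-m)) m else 0)"
proof -
  have "coeff (coeff (sig p) k) m = (\<Sum>i\<le>degree p. if i \<le> k \<and> k - i = m then coeff (coeff p i) m else 0)"
    unfolding sig_sum coeff_sum by (intro sum.cong refl) (auto simp: coeff_sig0 mult.commute[of _ "monom 1 _"] coeff_monom_mult)
  also have "\<dots> = (\<Sum>i\<le>degree p. if i = k - m then (if m \<le> k then coeff (coeff p (k-m)) m else 0) else 0)"
    by (intro sum.cong refl) auto
  also have "\<dots> = (if m \<le> k then coeff (coeff p (k-m)) m else 0)"
    by (cases "k - m \<le> degree p") (auto simp: coeff_eq_0)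
  finally show ?thesis .
qed

lemma sig_add: "sig (p+q) = sig p + sig q"
  by (simp add: sig_def map_poly_hom_add sig0_add)
lemma sig_mult: "sig (p*q) = sig p * sig q"
  by (simp add: sig_def map_poly_hom_mult sig0_add sig0_mult)



lemma tdeg_set_finite: "finite {i + degree (coeff p i) | i. coeff p i \<noteq> 0}"
proof -
  have "{i + degree (coeff p i) | i. coeff p i \<noteq> 0} \<subseteq> (\<lambda>i. i + degree (coeff p i)) ` {..degree p}"
    by (auto intro: le_degree)
  then show ?thesis by (rule finite_subset) simp
qed

lemma tdeg_ge: "coeff (coeff p i) j \<noteq> 0 \<Longrightarrow> i + j \<le> tdeg p"
proof -
  assume h: "coeff (coeff p i) j \<noteq> 0"
  then have "coeff p i \<noteq> 0" by auto
  moreover have "j \<le> degree (coeff p i)" using h by (rule le_degree)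
  ultimately have "i + degree (coeff p i) \<in> insert 0 {i + degree (coeff p i) | i. coeff p i \<noteq> 0}" by blast
  then have "i + degree (coeff p i) \<le> tdeg p" unfolding tdeg_def
    by (intro Max_ge) (simp_all add: tdeg_set_finite)
  with \<open>j \<le> _\<close> show ?thesis by simp
qed

lemma tdeg_attained:
  assumes "p \<noteq> 0" shows "\<exists>i. coeff p i \<noteq> 0 \<and> tdeg p = i + degree (coeff p i)"
proof -
  let ?S = "{i + degree (coeff p i) | i. coeff p i \<noteq> 0}"
  obtain i where i: "coeff p i \<noteq> 0" using assms by (meson leading_coeff_0_iff)
  then have ne: "?S \<noteq> {}" by blast
  have "tdeg p = max 0 (Max ?S)" unfolding tdeg_def
    by (rule Max_insert[OF tdeg_set_finite ne])
  then have "tdeg p = Max ?S" by simp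
  also have "\<dots> \<in> ?S" by (rule Max_in[OF tdeg_set_finite ne])
  finally show ?thesis by blast
qed

lemma tdeg_sig: "tdeg p = degree (sig p)"
proof (cases "p = 0")
  case True
  then show ?thesis by (simp add: tdeg_def sig_def)
next
  case False
  have "degree (sig p) \<le> tdeg p"
  proof (rule degree_le, intro allI impI)
    fix k assume k: "tdeg p < k"
    show "coeff (sig p) k = 0"
    proof (rule poly_eqI)
      fix m
      show "coeff (coeff (sig p) k) m = coeff 0 m"
      proof (cases "m \<le> k")
        case True
        then have "\<not> (k - m) + m \<le> tdeg p" using k by simp
        then have "coeff (coeff p (k-m)) m = 0" using tdeg_ge[of p "k-m" m] by blast
        then show ?thesis using True by (simp add: coeff_coeff_sig)
      qed (simp add: coeff_coeff_sig)
    qed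
  qed
  moreover have "tdeg p \<le> degree (sig p)"
  proof -
    obtain i where i: "coeff p i \<noteq> 0" "tdeg p = i + degree (coeff p i)"
      using tdeg_attained[OF False] by blast
    have "coeff (coeff (sig p) (tdeg p)) (degree (coeff p i)) \<noteq> 0"
      using i by (simp add: coeff_coeff_sig)
    then have "coeff (sig p) (tdeg p) \<noteq> 0" by auto
    then show ?thesis by (rule le_degree)
  qed
  ultimately show ?thesis by simp
qed

lemma sig_eq0[simp]: "sig p = 0 \<longleftrightarrow> p = 0"
proof
  assume h: "sig p = 0"
  show "p = 0"
  proof (rule poly_eqI, rule poly_eqI)
    fix i j
    show "coeff (coeff p i) j = coeff (coeff 0 i) j"
      using arg_cong[OF h, of "\<lambda>r. coeff (coeff r (i+j)) j"] by (simp add: coeff_coeff_sig)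
  qed
qed (simp add: sig_def)

lemma tdeg_mult: "p \<noteq> 0 \<Longrightarrow> q \<noteq> 0 \<Longrightarrow> tdeg (p*q) = tdeg p + tdeg q"
  by (simp add: tdeg_sig sig_mult degree_mult_eq)

lemma tdeg_add_le: "tdeg (p+q) \<le> max (tdeg p) (tdeg q)"
  by (simp add: tdeg_sig sig_add degree_add_le)

lemma tdeg_add_left: "tdeg q < tdeg p \<Longrightarrow> tdeg (p+q) = tdeg p"
  by (simp add: tdeg_sig sig_add degree_add_eq_left)

lemma tdeg_add_right: "tdeg p < tdeg q \<Longrightarrow> tdeg (p+q) = tdeg q"
  by (simp add: tdeg_sig sig_add degree_add_eq_right)

lemma tdeg_const: "tdeg [:[:c:]:] = 0"
  by (simp add: tdeg_sig sig_def sig0_def Lc_def map_poly_pCons)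



lemma Fract1_eq0[simp]: "Fract (p::'a::idom) 1 = 0 \<longleftrightarrow> p = 0"
  by (simp add: Zero_fract_def eq_fract)

lemma lift_eq0[simp]: "lift (c::'a::idom) = 0 \<longleftrightarrow> c = 0"
  by (simp add: lift_def Zero_fract_def eq_fract)

lemma var_ne0[simp]: "(var :: 'a::idom poly fract) \<noteq> 0"
  by (simp add: var_def Zero_fract_def eq_fract)

lemma lift_add: "lift (x + y) = lift x + lift (y::'a::idom)"
  by (simp add: lift_def)
lemma lift_mult: "lift (x * y) = lift x * lift (y::'a::idom)"
  by (simp add: lift_def ac_simps)
lemma lift_one: "lift (1::'a::idom) = 1"
  by (simp add: lift_def One_fract_def one_pCons)
lemma lift_two: "lift (2::'a::idom) = 2"
  using lift_add[of "1::'a" 1] by (simp add: lift_one one_add_one)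
lemma lift_minus: "lift (- x) = - lift (x::'a::idom)"
  by (simp add: lift_def)
lemma lift_diff: "lift (x - y) = lift x - lift (y::'a::idom)"
  by (simp add: lift_def)
lemma lift_pow: "lift (x ^ n) = lift (x::'a::idom) ^ n"
  by (induct n) (simp_all add: lift_mult lift_one)

lemma quad_var:
  "lift c0 + lift c1 * var + lift c2 * var^2 = Fract [:c0, c1, c2:] (1::'a::idom poly)"
  by (simp add: lift_def var_def power2_eq_square)

lemma a_ne0: "a1 \<noteq> 0" "a2 \<noteq> 0" "a3 \<noteq> 0" "a5 \<noteq> 0" "a6 \<noteq> 0"
  by (simp_all add: a1_def a2_def a3_def a5_def a6_def)

definition Res :: K5 where
  "Res = a3^4 - a2*a3^2*a5 + a2^2*a3*a6 + a1*a3*a5^2 - 2*a1*a3^2*a6 - a1*a2*a5*a6 + a1^2*a6^2"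

lemma Res_ne0: "Res \<noteq> 0"
proof -
  define A1 :: K4 where "A1 = lift (lift (lift (var :: K1)))"
  define A2 :: K4 where "A2 = lift (lift (var :: K2))"
  define A3 :: K4 where "A3 = lift (var :: K3)"
  define A5 :: K4 where "A5 = var"
  have A1: "A1 \<noteq> 0" by (simp add: A1_def)
  have e: "a1 = lift A1" "a2 = lift A2" "a3 = lift A3" "a5 = lift A5" "a6 = var"
    by (simp_all add: A1_def A2_def A3_def A5_def a1_def a2_def a3_def a5_def a6_def)
  have "Res = lift (A3^4 - A2*A3^2*A5 + A1*A3*A5^2) + lift (A2^2*A3 - A1*A3^2 - A1*A3^2 - A1*A2*A5) * var
        + lift (A1^2) * var^2"
    unfolding Res_def e by (simp add: lift_add lift_mult lift_diff lift_pow lift_two algebra_simps)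
  also have "\<dots> = Fract [:A3^4 - A2*A3^2*A5 + A1*A3*A5^2, A2^2*A3 - A1*A3^2 - A1*A3^2 - A1*A2*A5, A1^2:] 1"
    by (rule quad_var)
  also have "\<dots> \<noteq> 0" using A1 by (simp only: Fract1_eq0) simp
  finally show ?thesis .
qed

definition C :: "K5 \<Rightarrow> bipoly" where "C c = [:[:c:]:]"
definition s0 :: bipoly where "s0 = [:[:0,1:]:]"
definition s1 :: bipoly where "s1 = [:0,1:]"
definition ev00 :: "bipoly \<Rightarrow> K5" where "ev00 p = coeff (coeff p 0) 0"

lemma ev00_mult: "ev00 (p*q) = ev00 p * ev00 q" by (simp add: ev00_def coeff_mult_0)
lemma ev00_add: "ev00 (p+q) = ev00 p + ev00 q" by (simp add: ev00_def)
lemma ev00_pow2: "ev00 (p^2) = ev00 p ^ 2" by (simp add: power2_eq_square ev00_mult)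
lemma ev00_C[simp]: "ev00 (C c) = c" by (simp add: ev00_def C_def)
lemma ev00_s[simp]: "ev00 s0 = 0" "ev00 s1 = 0" "ev00 1 = 1" by (simp_all add: ev00_def s0_def s1_def)

lemma C_mult: "C (x*y) = C x * C y" by (simp add: C_def)
lemma C_eq0[simp]: "C c = 0 \<longleftrightarrow> c = 0" by (simp add: C_def)
lemma C_unit: "c \<noteq> 0 \<Longrightarrow> is_unit (C c)"
proof -
  assume "c \<noteq> 0"
  then have "C c * C (inverse c) = 1" by (simp flip: C_mult) (simp add: C_def one_pCons)
  then show ?thesis by (metis dvdI)
qed

lemma tdeg_C: "tdeg (C c) = 0" by (simp add: C_def tdeg_const)
lemma tdeg_s: "tdeg s0 = 1" "tdeg s1 = 1" "tdeg (1::bipoly) = 0"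
  by (simp_all add: tdeg_sig sig_def s0_def s1_def sig0_def Lc_def X0_def map_poly_pCons one_pCons
        degree_monom_eq)

lemma s_ne0[simp]: "s0 \<noteq> 0" "s1 \<noteq> 0" by (simp_all add: s0_def s1_def)

lemma prime_s0: "prime_elem s0"
  unfolding s0_def prime_elem_const_poly_iff by (rule prime_elem_linear_field_poly) simp
lemma prime_s1: "prime_elem s1"
  unfolding s1_def by (rule prime_elem_linear_poly) simp_all

lemma ev00_coprime_s:
  assumes "ev00 x \<noteq> 0" and "s = s0 \<or> s = s1"
  shows "coprime s x"
proof -
  have "\<not> s dvd x"
  proof
    assume "s dvd x"
    then obtain k where "x = s * k" by (auto elim: dvdE)
    then have "ev00 x = 0" using assms(2) by (auto simp: ev00_mult)
    with assms(1) show False by simp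
  qed
  then show ?thesis using assms(2) prime_s0 prime_s1 prime_elem_imp_coprime by blast
qed

definition cc :: "nat \<Rightarrow> bipoly" where
  "cc n = (if n mod 4 = 0 then s0 else if n mod 4 = 1 then s1 else 1)"

lemma cc_ne0[simp]: "cc n \<noteq> 0" by (simp add: cc_def)

lemma ev_coprime_cc: "ev00 x \<noteq> 0 \<Longrightarrow> coprime x (cc k)"
  using ev00_coprime_s[of x s0] ev00_coprime_s[of x s1]
  by (auto simp: cc_def coprime_commute)

lemma cc_coprime: "coprime (cc k) (cc (Suc (Suc k)))"
  by (auto simp: cc_def) presburger+

lemma cc_shift4: "cc (Suc (Suc (Suc (Suc k)))) = cc k" by (simp add: cc_def)

lemma ev00_cc_cases: "(ev00 (cc k) = 0 \<and> ev00 (cc (Suc (Suc k))) = 1) \<or> (ev00 (cc k) = 1 \<and> ev00 (cc (Suc (Suc k))) = 0)"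
  by (auto simp: cc_def) presburger+

lemma tdeg_cc_cases: "(tdeg (cc k) = 1 \<and> tdeg (cc (Suc (Suc k))) = 0) \<or> (tdeg (cc k) = 0 \<and> tdeg (cc (Suc (Suc k))) = 1)"
  by (auto simp: cc_def tdeg_s) presburger+



section \<open>Generic algebraic identities\<close>

lemma cong1:
  fixes x p D am amm bm bmm cm ck fC fE fF gA gB :: "'a::idom"
  assumes "am*amm = fC*(p*x)^2 + fE*(p*x)*D + fF*D^2"
      and "bm*bmm = gA*(p*x)^2 + gB*(p*x)*D + fC*D^2"
  shows "x dvd ((amm*bmm)^2 * (fC*(cm*am)^2 + fE*(cm*am)*(ck*bm) + fF*(ck*bm)^2)
           - fC*fF*D^4 * (fC*(ck*amm)^2 + fE*(ck*amm)*(cm*bmm) + fF*(cm*bmm)^2))"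
  using assms unfolding dvd_def by algebra

lemma cong2:
  fixes x q P am amm bm bmm cm ck fC fE fF gA gB :: "'a::idom"
  assumes "am*amm = fC*P^2 + fE*P*(q*x) + fF*(q*x)^2"
      and "bm*bmm = gA*P^2 + gB*P*(q*x) + fC*(q*x)^2"
  shows "x dvd ((amm*bmm)^2 * (gA*(cm*am)^2 + gB*(cm*am)*(ck*bm) + fC*(ck*bm)^2)
           - gA*fC*P^4 * (gA*(ck*amm)^2 + gB*(ck*amm)*(cm*bmm) + fC*(cm*bmm)^2))"
  using assms unfolding dvd_def by algebra

lemma res1:
  fixes pa pb pc pe pf x y :: "'a::idom"
  shows "(pc^4 - pb*pc^2*pe + pb^2*pc*pf + pa*pc*pe^2 - 2*pa*pc^2*pf - pa*pb*pe*pf + pa^2*pf^2) * x^3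
   = ((pc^3 - pb*pc*pe + pb^2*pf - pa*pc*pf)*x + (pb*pc*pf - pc^2*pe)*y) * (pc*x^2+pe*x*y+pf*y^2)
   + ((pc*pe^2 - pc^2*pf - pb*pe*pf + pa*pf^2)*x + (pc*pe*pf - pb*pf^2)*y) * (pa*x^2+pb*x*y+pc*y^2)"
  by algebra
lemma res2:
  fixes pa pb pc pe pf x y :: "'a::idom"
  shows "(pc^4 - pb*pc^2*pe + pb^2*pc*pf + pa*pc*pe^2 - 2*pa*pc^2*pf - pa*pb*pe*pf + pa^2*pf^2) * y^3
   = ((pa*pb*pc - pa^2*pe)*x + (pb^2*pc - pa*pc^2 - pa*pb*pe + pa^2*pf)*y) * (pc*x^2+pe*x*y+pf*y^2)
   + ((pa*pc*pe - pb*pc^2)*x + (pc^3 - pb*pc*pe + pa*pe^2 - pa*pc*pf)*y) * (pa*x^2+pb*x*y+pc*y^2)"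
  by algebra

lemma coprime_add_mult:
  fixes x y z k :: bipoly
  assumes "coprime x y" "z = y + x * k" shows "coprime x z"
proof (rule coprimeI)
  fix d assume "d dvd x" "d dvd z"
  have "y = z - x * k" using assms(2) by simp
  then have "d dvd y" using \<open>d dvd x\<close> \<open>d dvd z\<close> by (simp add: dvd_diff dvd_mult2)
  with \<open>d dvd x\<close> show "is_unit d" using assms(1) coprime_common_divisor by blast
qed

section \<open>The sequences\<close>

definition FF :: "bipoly \<Rightarrow> bipoly \<Rightarrow> bipoly" where
  "FF x y = C a3 * x^2 + C a5 * x * y + C a6 * y^2"
definition GG :: "bipoly \<Rightarrow> bipoly \<Rightarrow> bipoly" where
  "GG x y = C a1 * x^2 + C a2 * x * y + C a3 * y^2"

fun AB :: "nat \<Rightarrow> bipoly \<times> bipoly" where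
  "AB 0 = (1, 1)"
| "AB (Suc 0) = (1, 1)"
| "AB (Suc (Suc n)) =
     (FF (cc (Suc n) * fst (AB (Suc n))) (cc (n+3) * snd (AB (Suc n))) div fst (AB n),
      GG (cc (Suc n) * fst (AB (Suc n))) (cc (n+3) * snd (AB (Suc n))) div snd (AB n))"

definition A :: "nat \<Rightarrow> bipoly" where "A n = fst (AB n)"
definition B :: "nat \<Rightarrow> bipoly" where "B n = snd (AB n)"
definition N :: "nat \<Rightarrow> bipoly" where "N n = cc n * A n"
definition D :: "nat \<Rightarrow> bipoly" where "D n = cc (n+2) * B n"

lemma A01[simp]: "A 0 = 1" "A 1 = 1" "B 0 = 1" "B 1 = 1" by (simp_all add: A_def B_def)

lemma A_SS: "A (Suc (Suc n)) = FF (N (Suc n)) (D (Suc n)) div A n"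
  and B_SS: "B (Suc (Suc n)) = GG (N (Suc n)) (D (Suc n)) div B n"
  by (simp_all add: A_def B_def N_def D_def eval_nat_numeral)

lemma D_S: "D n = cc (Suc (Suc n)) * B n" by (simp add: D_def eval_nat_numeral)

lemma C_add: "C (x+y) = C x + C y" by (simp add: C_def)
lemma C_diff: "C (x-y) = C x - C y" by (simp add: C_def)
lemma C_pow: "C (x^n) = C x ^ n" by (induct n) (simp_all add: C_mult, simp add: C_def one_pCons)
lemma C_1: "C 1 = 1" by (simp add: C_def one_pCons)
lemma C_2: "C 2 = 2" by (metis C_1 C_add one_add_one)

lemma CRes: "C Res = C a3^4 - C a2*C a3^2*C a5 + C a2^2*C a3*C a6 + C a1*C a3*C a5^2
   - 2*C a1*C a3^2*C a6 - C a1*C a2*C a5*C a6 + C a1^2*C a6^2"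
  by (simp add: Res_def C_add C_diff C_mult C_pow C_2)

lemma coprime_FF_GG:
  assumes "coprime x y" shows "coprime (FF x y) (GG x y)"
proof (rule coprimeI)
  fix d assume d1: "d dvd FF x y" and d2: "d dvd GG x y"
  have u: "is_unit (C Res)" using Res_ne0 by (rule C_unit)
  have d1': "d dvd C a3 * x^2 + C a5 * x * y + C a6 * y^2" using d1 by (simp add: FF_def)
  have d2': "d dvd C a1 * x^2 + C a2 * x * y + C a3 * y^2" using d2 by (simp add: GG_def)
  have "d dvd C Res * x^3"
    unfolding res1[where pa="C a1" and pb="C a2" and pc="C a3" and pe="C a5" and pf="C a6" and x=x and y=y, folded CRes] by (rule dvd_add) (rule dvd_mult, fact)+
  then have x3: "d dvd x^3" by (rule dvd_mult_unit_iff'[OF u, THEN iffD1])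
  have "d dvd C Res * y^3"
    unfolding res2[where pa="C a1" and pb="C a2" and pc="C a3" and pe="C a5" and pf="C a6" and x=x and y=y, folded CRes] by (rule dvd_add) (rule dvd_mult, fact)+
  then have y3: "d dvd y^3" by (rule dvd_mult_unit_iff'[OF u, THEN iffD1])
  note x3 y3
  moreover have "coprime (x^3) (y^3)" using assms by simp
  ultimately show "is_unit d" using coprime_common_divisor by blast
qed

lemma ev00_FF: "ev00 (FF x y) = a3 * ev00 x ^ 2 + a5 * ev00 x * ev00 y + a6 * ev00 y ^ 2"
  by (simp add: FF_def ev00_add ev00_mult ev00_pow2)
lemma ev00_GG: "ev00 (GG x y) = a1 * ev00 x ^ 2 + a2 * ev00 x * ev00 y + a3 * ev00 y ^ 2"
  by (simp add: GG_def ev00_add ev00_mult ev00_pow2)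

lemma tdeg_mult_le: "tdeg (p*q) \<le> tdeg p + tdeg q"
  by (simp add: tdeg_sig sig_mult degree_mult_le)

lemma tdeg_quad:
  assumes c: "c1 \<noteq> 0" "c3 \<noteq> 0" and x: "x \<noteq> 0" and y: "y \<noteq> 0"
    and d: "(tdeg x = k+1 \<and> tdeg y = k) \<or> (tdeg x = k \<and> tdeg y = k+1)"
  shows "tdeg (C c1 * x^2 + C c2 * x * y + C c3 * y^2) = 2*k+2"
proof -
  have tx: "tdeg (C c * x^2) = 2 * tdeg x" if "c \<noteq> 0" for c
    using that x by (simp add: tdeg_mult tdeg_C power2_eq_square)
  have ty: "tdeg (C c * y^2) = 2 * tdeg y" if "c \<noteq> 0" for c
    using that y by (simp add: tdeg_mult tdeg_C power2_eq_square)
  have tm: "tdeg (C c2 * x * y) \<le> 2*k+1"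
    using tdeg_mult_le[of "C c2 * x" y] tdeg_mult_le[of "C c2" x] d by (simp add: tdeg_C) linarith
  from d show ?thesis
  proof
    assume h: "tdeg x = k+1 \<and> tdeg y = k"
    have "tdeg (C c2 * x * y + C c3 * y^2) \<le> 2*k+1"
      using tdeg_add_le[of "C c2 * x * y" "C c3 * y^2"] tm ty[OF c(2)] h by simp
    then have "tdeg (C c1 * x^2 + (C c2 * x * y + C c3 * y^2)) = 2*k+2"
      using tx[OF c(1)] h by (subst tdeg_add_left) simp_all
    then show ?thesis by (simp add: add.assoc)
  next
    assume h: "tdeg x = k \<and> tdeg y = k+1"
    have "tdeg (C c1 * x^2 + C c2 * x * y) \<le> 2*k+1"
      using tdeg_add_le[of "C c1 * x^2" "C c2 * x * y"] tm tx[OF c(1)] h by simp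
    then show ?thesis
      using ty[OF c(2)] h by (subst tdeg_add_right) simp_all
  qed
qed



definition Sg :: "nat \<Rightarrow> bool" where
  "Sg n \<longleftrightarrow> ev00 (A n) \<noteq> 0 \<and> ev00 (B n) \<noteq> 0 \<and> coprime (A n) (B n)
     \<and> tdeg (A n) = n*(n-1) \<and> tdeg (B n) = n*(n-1)"
definition Tg :: "nat \<Rightarrow> bool" where
  "Tg n \<longleftrightarrow> coprime (A (Suc n)) (A n) \<and> coprime (A (Suc n)) (B n)
     \<and> coprime (B (Suc n)) (A n) \<and> coprime (B (Suc n)) (B n)"
definition Eg :: "nat \<Rightarrow> bool" where
  "Eg n \<longleftrightarrow> A (Suc (Suc n)) * A n = FF (N (Suc n)) (D (Suc n))
     \<and> B (Suc (Suc n)) * B n = GG (N (Suc n)) (D (Suc n))"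

lemma A01'[simp]: "A (Suc 0) = 1" "B (Suc 0) = 1" by (simp_all add: A_def B_def)

lemma ev_ne0: "ev00 x \<noteq> 0 \<Longrightarrow> x \<noteq> 0" by (auto simp: ev00_def)

lemma coprime_N_D: "Sg n \<Longrightarrow> coprime (N n) (D n)"
  unfolding Sg_def N_def D_S
  using cc_coprime[of n] ev_coprime_cc[of "A n" "Suc (Suc n)"] ev_coprime_cc[of "B n" n]
  by (auto simp: coprime_commute)

lemma E0: "Eg 0"
  using A_SS[of 0] B_SS[of 0] by (simp add: Eg_def)

lemma E1: "Eg 1"
  using A_SS[of 1] B_SS[of 1] by (simp add: Eg_def)

lemma S_step:
  assumes S0: "Sg n" and S1: "Sg (Suc n)" and E: "Eg n"
  shows "Sg (Suc (Suc n))"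
proof -
  define a where "a = A (Suc n)"
  define b where "b = B (Suc n)"
  define p where "p = cc (Suc n)"
  define q where "q = cc (Suc (Suc (Suc n)))"
  have N': "N (Suc n) = p * a" and D': "D (Suc n) = q * b" by (simp_all add: N_def D_S a_def b_def p_def q_def)
  have ea: "ev00 a \<noteq> 0" and eb: "ev00 b \<noteq> 0" using S1 by (simp_all add: Sg_def a_def b_def)
  have ea0: "ev00 (A n) \<noteq> 0" and eb0: "ev00 (B n) \<noteq> 0" using S0 by (simp_all add: Sg_def)
  have cs: "(ev00 p = 0 \<and> ev00 q = 1) \<or> (ev00 p = 1 \<and> ev00 q = 0)"
    using ev00_cc_cases[of "Suc n"] by (simp add: p_def q_def)
  have "ev00 (A (Suc (Suc n))) * ev00 (A n) = ev00 (FF (N (Suc n)) (D (Suc n)))"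
    unfolding ev00_mult[symmetric] using E by (simp add: Eg_def)
  also have "\<dots> \<noteq> 0" unfolding ev00_FF N' D' using cs ea eb a_ne0 by (auto simp: ev00_mult)
  finally have eA: "ev00 (A (Suc (Suc n))) \<noteq> 0" by simp
  have "ev00 (B (Suc (Suc n))) * ev00 (B n) = ev00 (GG (N (Suc n)) (D (Suc n)))"
    unfolding ev00_mult[symmetric] using E by (simp add: Eg_def)
  also have "\<dots> \<noteq> 0" unfolding ev00_GG N' D' using cs ea eb a_ne0 by (auto simp: ev00_mult)
  finally have eB: "ev00 (B (Suc (Suc n))) \<noteq> 0" by simp
  have "coprime (FF (N (Suc n)) (D (Suc n))) (GG (N (Suc n)) (D (Suc n)))"
    by (rule coprime_FF_GG[OF coprime_N_D[OF S1]])
  moreover have "A (Suc (Suc n)) * A n = FF (N (Suc n)) (D (Suc n))"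
    and "B (Suc (Suc n)) * B n = GG (N (Suc n)) (D (Suc n))" using E by (simp_all add: Eg_def)
  ultimately have "coprime (A (Suc (Suc n)) * A n) (B (Suc (Suc n)) * B n)" by simp
  then have cop: "coprime (A (Suc (Suc n))) (B (Suc (Suc n)))" by simp
  have tc: "(tdeg p = 1 \<and> tdeg q = 0) \<or> (tdeg p = 0 \<and> tdeg q = 1)"
    using tdeg_cc_cases[of "Suc n"] by (simp add: p_def q_def)
  have ta: "tdeg a = Suc n * n" and tb: "tdeg b = Suc n * n" using S1 by (simp_all add: Sg_def a_def b_def)
  have a0: "a \<noteq> 0" "b \<noteq> 0" using ea eb ev_ne0 by blast+
  have p0: "p \<noteq> 0" "q \<noteq> 0" by (simp_all add: p_def q_def)
  have tN: "tdeg (N (Suc n)) = tdeg p + Suc n * n" unfolding N' using a0 p0 ta by (simp add: tdeg_mult)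
  have tD: "tdeg (D (Suc n)) = tdeg q + Suc n * n" unfolding D' using a0 p0 tb by (simp add: tdeg_mult)
  have dd: "(tdeg (N (Suc n)) = Suc n * n + 1 \<and> tdeg (D (Suc n)) = Suc n * n)
      \<or> (tdeg (N (Suc n)) = Suc n * n \<and> tdeg (D (Suc n)) = Suc n * n + 1)" using tc tN tD by auto
  have nz: "N (Suc n) \<noteq> 0" "D (Suc n) \<noteq> 0" using a0 p0 by (simp_all add: N' D')
  have tF: "tdeg (FF (N (Suc n)) (D (Suc n))) = 2*(Suc n * n)+2"
    unfolding FF_def by (rule tdeg_quad[OF _ _ nz dd]) (simp_all add: a_ne0)
  have tG: "tdeg (GG (N (Suc n)) (D (Suc n))) = 2*(Suc n * n)+2"
    unfolding GG_def by (rule tdeg_quad[OF _ _ nz dd]) (simp_all add: a_ne0)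
  have ar: "n*(n-1) + Suc (Suc n) * Suc n = 2*(Suc n * n)+2" by (cases n) (simp_all add: algebra_simps)
  have "tdeg (A (Suc (Suc n))) + tdeg (A n) = 2*(Suc n * n)+2"
    using E tF ev_ne0[OF eA] ev_ne0[OF ea0] by (simp add: Eg_def tdeg_mult[symmetric])
  then have tA: "tdeg (A (Suc (Suc n))) = Suc (Suc n) * (Suc (Suc n) - 1)" using S0 ar by (simp add: Sg_def)
  have "tdeg (B (Suc (Suc n))) + tdeg (B n) = 2*(Suc n * n)+2"
    using E tG ev_ne0[OF eB] ev_ne0[OF eb0] by (simp add: Eg_def tdeg_mult[symmetric])
  then have tB: "tdeg (B (Suc (Suc n))) = Suc (Suc n) * (Suc (Suc n) - 1)" using S0 ar by (simp add: Sg_def)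
  show ?thesis unfolding Sg_def using eA eB cop tA tB by blast
qed

lemma T0: "Tg 0" by (simp add: Tg_def)

lemma T_step:
  assumes S1: "Sg (Suc n)" and E: "Eg n"
  shows "Tg (Suc n)"
proof -
  define a where "a = A (Suc n)"
  define b where "b = B (Suc n)"
  define p where "p = cc (Suc n)"
  define q where "q = cc (Suc (Suc (Suc n)))"
  have N': "N (Suc n) = p * a" and D': "D (Suc n) = q * b" by (simp_all add: N_def D_S a_def b_def p_def q_def)
  have ea: "ev00 a \<noteq> 0" and eb: "ev00 b \<noteq> 0" and ab: "coprime a b"
    using S1 by (simp_all add: Sg_def a_def b_def)
  have ca: "coprime a p" "coprime a q" "coprime b p" "coprime b q"
    using ea eb ev_coprime_cc by (simp_all add: p_def q_def)
  have u: "coprime x (C c)" if "c \<noteq> 0" for x c by (rule is_unit_right_imp_coprime[OF C_unit[OF that]])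
  have E1: "A (Suc (Suc n)) * A n = FF (p*a) (q*b)" and E2: "B (Suc (Suc n)) * B n = GG (p*a) (q*b)"
    using E by (simp_all add: Eg_def N' D')
  have e1: "A (Suc (Suc n)) * A n = C a6 * (q * b)^2 + a * (C a3 * p^2 * a + C a5 * p * (q * b))"
    unfolding E1 FF_def by (simp add: algebra_simps power2_eq_square)
  have e2: "A (Suc (Suc n)) * A n = C a3 * (p * a)^2 + b * (C a5 * (p * a) * q + C a6 * q^2 * b)"
    unfolding E1 FF_def by (simp add: algebra_simps power2_eq_square)
  have e3: "B (Suc (Suc n)) * B n = C a3 * (q * b)^2 + a * (C a1 * p^2 * a + C a2 * p * (q * b))"
    unfolding E2 GG_def by (simp add: algebra_simps power2_eq_square)
  have e4: "B (Suc (Suc n)) * B n = C a1 * (p * a)^2 + b * (C a2 * (p * a) * q + C a3 * q^2 * b)"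
    unfolding E2 GG_def by (simp add: algebra_simps power2_eq_square)
  have ba: "coprime b a" using ab by (simp add: coprime_commute)
  have "coprime a (A (Suc (Suc n)) * A n)"
    by (rule coprime_add_mult[OF _ e1]) (simp add: u a_ne0 ca ab)
  then have c1: "coprime (A (Suc (Suc n))) a" by (simp add: coprime_commute)
  have "coprime b (A (Suc (Suc n)) * A n)"
    by (rule coprime_add_mult[OF _ e2]) (simp add: u a_ne0 ca ba)
  then have c2: "coprime (A (Suc (Suc n))) b" by (simp add: coprime_commute)
  have "coprime a (B (Suc (Suc n)) * B n)"
    by (rule coprime_add_mult[OF _ e3]) (simp add: u a_ne0 ca ab)
  then have c3: "coprime (B (Suc (Suc n))) a" by (simp add: coprime_commute)
  have "coprime b (B (Suc (Suc n)) * B n)"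
    by (rule coprime_add_mult[OF _ e4]) (simp add: u a_ne0 ca ba)
  then have c4: "coprime (B (Suc (Suc n))) b" by (simp add: coprime_commute)
  show ?thesis unfolding Tg_def using c1 c2 c3 c4 by (simp add: a_def b_def)
qed



lemma E_step:
  assumes E1: "Eg (Suc m)" and E0: "Eg m" and T: "Tg (Suc m)"
  shows "Eg (Suc (Suc m))"
proof -
  define x where "x = A (Suc (Suc m))"
  define y where "y = B (Suc (Suc m))"
  define a3' where "a3' = A (Suc (Suc (Suc m)))"
  define b3' where "b3' = B (Suc (Suc (Suc m)))"
  define a1' where "a1' = A (Suc m)"
  define b1' where "b1' = B (Suc m)"
  define p where "p = cc (Suc (Suc m))"
  define q where "q = cc (Suc (Suc (Suc (Suc m))))"
  define cm where "cm = cc (Suc (Suc (Suc m)))"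
  define ck where "ck = cc (Suc m)"
  have Nm: "N (Suc (Suc m)) = p * x" and Dm: "D (Suc (Suc m)) = q * y"
    by (simp_all add: N_def D_S x_def y_def p_def q_def)
  have N3: "N (Suc (Suc (Suc m))) = cm * a3'" and D3: "D (Suc (Suc (Suc m))) = ck * b3'"
    by (simp_all add: N_def D_S cm_def ck_def a3'_def b3'_def cc_shift4)
  have N1: "N (Suc m) = ck * a1'" and D1: "D (Suc m) = cm * b1'"
    by (simp_all add: N_def D_S cm_def ck_def a1'_def b1'_def)
  have h1: "a3' * a1' = FF (p*x) (q*y)" and h2: "b3' * b1' = GG (p*x) (q*y)"
    using E1 by (simp_all add: Eg_def Nm Dm a3'_def a1'_def b3'_def b1'_def)
  have h0a: "FF (ck*a1') (cm*b1') = x * A m" and h0b: "GG (ck*a1') (cm*b1') = y * B m"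
    using E0 by (simp_all add: Eg_def N1 D1 x_def y_def mult.commute)
  have cx: "coprime x ((a1'*b1')^2)" and cy: "coprime y ((a1'*b1')^2)"
    using T by (simp_all add: Tg_def x_def y_def a1'_def b1'_def)
  have "x dvd ((a1'*b1')^2 * (C a3*(cm*a3')^2 + C a5*(cm*a3')*(ck*b3') + C a6*(ck*b3')^2)
           - C a3*C a6*(q*y)^4 * (C a3*(ck*a1')^2 + C a5*(ck*a1')*(cm*b1') + C a6*(cm*b1')^2))"
    by (rule cong1[where x=x and p=p and D="q*y" and am=a3' and amm=a1' and bm=b3' and bmm=b1'
          and cm=cm and ck=ck and fC="C a3" and fE="C a5" and fF="C a6" and gA="C a1" and gB="C a2"])
       (use h1 h2 in \<open>simp_all add: FF_def GG_def\<close>)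
  then have "x dvd ((a1'*b1')^2 * FF (cm*a3') (ck*b3') - C a3*C a6*(q*y)^4 * (x * A m))"
    using h0a by (simp add: FF_def)
  then have "x dvd ((a1'*b1')^2 * FF (cm*a3') (ck*b3'))"
    by (metis diff_add_cancel dvd_add dvd_mult dvd_triv_left)
  then have dx: "x dvd FF (N (Suc (Suc (Suc m)))) (D (Suc (Suc (Suc m))))"
    using cx by (simp add: N3 D3 coprime_dvd_mult_right_iff)
  have "y dvd ((a1'*b1')^2 * (C a1*(cm*a3')^2 + C a2*(cm*a3')*(ck*b3') + C a3*(ck*b3')^2)
           - C a1*C a3*(p*x)^4 * (C a1*(ck*a1')^2 + C a2*(ck*a1')*(cm*b1') + C a3*(cm*b1')^2))"
    by (rule cong2[where x=y and q=q and P="p*x" and am=a3' and amm=a1' and bm=b3' and bmm=b1'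
          and cm=cm and ck=ck and fC="C a3" and fE="C a5" and fF="C a6" and gA="C a1" and gB="C a2"])
       (use h1 h2 in \<open>simp_all add: FF_def GG_def\<close>)
  then have "y dvd ((a1'*b1')^2 * GG (cm*a3') (ck*b3') - C a1*C a3*(p*x)^4 * (y * B m))"
    using h0b by (simp add: GG_def)
  then have "y dvd ((a1'*b1')^2 * GG (cm*a3') (ck*b3'))"
    by (metis diff_add_cancel dvd_add dvd_mult dvd_triv_left)
  then have dy: "y dvd GG (N (Suc (Suc (Suc m)))) (D (Suc (Suc (Suc m))))"
    using cy by (simp add: N3 D3 coprime_dvd_mult_right_iff)
  show ?thesis unfolding Eg_def A_SS[of "Suc (Suc m)"] B_SS[of "Suc (Suc m)"]
    using dx dy by (simp add: x_def y_def)
qed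

lemma all_good: "(Sg n \<and> Sg (Suc n) \<and> Tg n \<and> Eg n) \<and> (Sg (Suc n) \<and> Sg (Suc (Suc n)) \<and> Tg (Suc n) \<and> Eg (Suc n))"
proof (induct n)
  case 0
  have S0: "Sg 0" and S1: "Sg 1" by (simp_all add: Sg_def tdeg_s)
  have S2: "Sg 2" using S_step[OF S0 _ E0] S1 by (simp add: numeral_2_eq_2)
  have T1: "Tg 1" using T_step[of 0] S1 E0 by simp
  show ?case using S0 S1 S2 T0 T1 E0 E1 by (simp add: numeral_2_eq_2)
next
  case (Suc n)
  then have a: "Sg (Suc n)" "Sg (Suc (Suc n))" "Tg (Suc n)" "Eg (Suc n)" "Eg n" by simp_all
  have S3: "Sg (Suc (Suc (Suc n)))" by (rule S_step[OF a(1) a(2) a(4)])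
  have T2: "Tg (Suc (Suc n))" by (rule T_step[OF a(2) a(4)])
  have E2: "Eg (Suc (Suc n))" by (rule E_step[OF a(4) a(5) a(3)])
  show ?case using a S3 T2 E2 by simp
qed



definition io :: "bipoly \<Rightarrow> ratfun" where "io p = Fract p 1"

lemma io_add: "io (x+y) = io x + io y" by (simp add: io_def)
lemma io_mult: "io (x*y) = io x * io y" by (simp add: io_def)
lemma io_pow2: "io (x^2) = io x ^ 2" by (simp add: power2_eq_square io_mult)
lemma io_eq0[simp]: "io x = 0 \<longleftrightarrow> x = 0" by (simp add: io_def)
lemma io_1: "io 1 = 1" by (simp add: io_def One_fract_def)
lemma io_C: "io (C c) = cst c" by (simp add: io_def C_def cst_def)

lemma io_FF: "io (FF x y) = cst a3 * io x ^ 2 + cst a5 * io x * io y + cst a6 * io y ^ 2"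
  by (simp add: FF_def io_add io_mult io_pow2 io_C)
lemma io_GG: "io (GG x y) = cst a1 * io x ^ 2 + cst a2 * io x * io y + cst a3 * io y ^ 2"
  by (simp add: GG_def io_add io_mult io_pow2 io_C)

lemma fld:
  fixes k1 k2 k3 k5 k6 n' d a2 an b2 bn cn c2 :: "'a::field"
  assumes nz: "d \<noteq> 0" "an \<noteq> 0" "bn \<noteq> 0" "cn \<noteq> 0" "c2 \<noteq> 0" "b2 \<noteq> 0"
    and e1: "k3*n'^2 + k5*n'*d + k6*d^2 = a2*an"
    and e2: "k1*n'^2 + k2*n'*d + k3*d^2 = b2*bn"
  shows "(k3*(n'/d)^2 + k5*(n'/d) + k6) / ((k1*(n'/d)^2 + k2*(n'/d) + k3) * ((cn*an)/(c2*bn)))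
         = (c2*a2)/(cn*b2)"
proof -
  have f1: "k3*(n'/d)^2 + k5*(n'/d) + k6 = (a2*an)/d^2"
    using nz(1) by (simp flip: e1 add: field_simps power2_eq_square)
  have f2: "k1*(n'/d)^2 + k2*(n'/d) + k3 = (b2*bn)/d^2"
    using nz(1) by (simp flip: e2 add: field_simps power2_eq_square)
  show ?thesis unfolding f1 f2 using nz by (simp add: field_simps power2_eq_square)
qed

lemma qrt_N_D: "qrt_u n = io (N n) / io (D n) \<and> qrt_u (Suc n) = io (N (Suc n)) / io (D (Suc n))"
proof (induct n)
  case 0
  have "N 0 = s0" "D 0 = 1" "N (Suc 0) = s1" "D (Suc 0) = 1"
    by (simp_all add: N_def D_S cc_def)
  then show ?case by (simp add: io_1 U0_def U1_def io_def s0_def s1_def)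
next
  case (Suc n)
  then have h0: "qrt_u n = io (N n) / io (D n)" and h1: "qrt_u (Suc n) = io (N (Suc n)) / io (D (Suc n))"
    by simp_all
  have G: "Sg n \<and> Sg (Suc n) \<and> Tg n \<and> Eg n" using all_good by blast
  have G2: "Sg (Suc (Suc n))" using all_good[of n] by blast
  have nzA: "A n \<noteq> 0" "B n \<noteq> 0" "B (Suc (Suc n)) \<noteq> 0" "A (Suc n) \<noteq> 0" "B (Suc n) \<noteq> 0"
    using G G2 ev_ne0 by (auto simp: Sg_def)
  have E: "A (Suc (Suc n)) * A n = FF (N (Suc n)) (D (Suc n))"
          "B (Suc (Suc n)) * B n = GG (N (Suc n)) (D (Suc n))" using G by (simp_all add: Eg_def)
  have Dn0: "D (Suc n) \<noteq> 0" using nzA by (simp add: D_S)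
  have "qrt_u (Suc (Suc n)) = (io (cc (Suc (Suc n))) * io (A (Suc (Suc n)))) / (io (cc n) * io (B (Suc (Suc n))))"
    unfolding qrt_u.simps h0 h1
    unfolding N_def[of n] D_S[of n] io_mult
  proof (rule fld)
    show "cst a3 * io (N (Suc n)) ^ 2 + cst a5 * io (N (Suc n)) * io (D (Suc n)) + cst a6 * io (D (Suc n)) ^ 2
        = io (A (Suc (Suc n))) * io (A n)"
      using arg_cong[OF E(1), of io] by (simp add: io_FF io_mult)
    show "cst a1 * io (N (Suc n)) ^ 2 + cst a2 * io (N (Suc n)) * io (D (Suc n)) + cst a3 * io (D (Suc n)) ^ 2
        = io (B (Suc (Suc n))) * io (B n)"
      using arg_cong[OF E(2), of io] by (simp add: io_GG io_mult)
  qed (use nzA Dn0 in simp_all)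
  also have "\<dots> = io (N (Suc (Suc n))) / io (D (Suc (Suc n)))"
    by (simp add: N_def D_S cc_shift4 io_mult)
  finally show ?case using h1 by simp
qed



theorem theorem3:
  fixes n :: nat
  shows "\<exists>P Q :: bipoly. Q \<noteq> 0 \<and> coprime P Q \<and> qrt_u n = Fract P Q \<and>
           max (tdeg P) (tdeg Q) = n^2 - n + 1"
proof (intro exI conjI)
  have S: "Sg n" using all_good[of n] by blast
  have nz: "A n \<noteq> 0" "B n \<noteq> 0" using S ev_ne0 by (auto simp: Sg_def)
  show "D n \<noteq> 0" using nz by (simp add: D_S)
  show "coprime (N n) (D n)" by (rule coprime_N_D[OF S])
  show "qrt_u n = Fract (N n) (D n)"
    using qrt_N_D[of n] by (simp add: io_def)
  have tN: "tdeg (N n) = tdeg (cc n) + n*(n-1)" using nz S by (simp add: N_def tdeg_mult Sg_def)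
  have tD: "tdeg (D n) = tdeg (cc (Suc (Suc n))) + n*(n-1)" using nz S by (simp add: D_S tdeg_mult Sg_def)
  have ar: "n^2 - n + 1 = n*(n-1) + 1" by (simp add: power2_eq_square diff_mult_distrib2)
  show "max (tdeg (N n)) (tdeg (D n)) = n^2 - n + 1"
    using tdeg_cc_cases[of n] tN tD ar by auto
qed

end
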